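(* Let $X_0, X_1, \dots, X_{T-1} \in \{0,1\}$ be any binary sequence, with burst density $\rho = T^{-1}\sum_t X_t$ and block-alternation rate $q = m/T$, where $m$ is the number of maximal runs of consecutive $1$'s. Let $\nu(w)$, $w \in \{0,1\}^2$, denote the empirical pair frequencies $\nu(w) = \frac{1}{T-1}\sum_{t=0}^{T-2} \mathbf{1}[X_t = w_0, X_{t+1} = w_1]$. Then \[ \nu(00) = 1-\rho-q+o(1),\quad \nu(01) = \nu(10) = q + o(1),\quad \nu(11) = \rho - q + o(1), \] where $o(1)$ denotes an error tending to $0$ as $T \to \infty$ uniformly over all such sequences. Consequently the depth-$3$ block total variation distance \[ \varepsilon_3 = \frac12 \sum_{w \in \{0,1\}^2} \bigl|\nu(w) - \rho^{s(w)}(1-\rho)^{2-s(w)}\bigr|, \qquad s(w) = w_0 + w_1, \] satisfies $\varepsilon_3 = 2|q - \rho(1-\rho)| + o(1)$.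
   Context: The sequence is thought of as decomposing into alternating blocks $1^{L_1}0^{G_1}1^{L_2}0^{G_2}\cdots 1^{L_m}0^{G_m}$, with $m$ burst runs (maximal runs of $1$'s) and $m$ gap runs (maximal runs of $0$'s). *)

theory Defs
  imports Complex_Main
begin

text \<open>A binary sequence X_0,...,X_{T-1} is a function X :: nat => nat with values in {0,1}
  on {..<T}; values beyond T-1 are irrelevant.\<close>

definition burst_density :: "nat \<Rightarrow> (nat \<Rightarrow> nat) \<Rightarrow> real" where
  "burst_density T X = (\<Sum>t<T. real (X t)) / real T"

definition num_runs :: "nat \<Rightarrow> (nat \<Rightarrow> nat) \<Rightarrow> nat" where
  "num_runs T X = card {t. t < T \<and> X t = 1 \<and> (t = 0 \<or> X (t - 1) = 0)}"

definition alt_rate :: "nat \<Rightarrow> (nat \<Rightarrow> nat) \<Rightarrow> real" where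
  "alt_rate T X = real (num_runs T X) / real T"

definition pair_freq :: "nat \<Rightarrow> (nat \<Rightarrow> nat) \<Rightarrow> nat \<Rightarrow> nat \<Rightarrow> real" where
  "pair_freq T X a b =
     (\<Sum>t<T - 1. if X t = a \<and> X (Suc t) = b then 1 else 0) / real (T - 1)"

definition eps3 :: "nat \<Rightarrow> (nat \<Rightarrow> nat) \<Rightarrow> real" where
  "eps3 T X = 1/2 * (\<Sum>(a, b) \<in> {0::nat, 1} \<times> {0::nat, 1}.
      \<bar>pair_freq T X a b - burst_density T X ^ (a + b) * (1 - burst_density T X) ^ (2 - (a + b))\<bar>)"

end

theory Submission
  imports Defs
begin

definition cnt :: "(nat \<Rightarrow> nat) \<Rightarrow> nat \<Rightarrow> nat \<Rightarrow> nat \<Rightarrow> real" where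
  "cnt X a b n = (\<Sum>t<n. if X t = a \<and> X (Suc t) = b then 1 else 0)"

lemma cnt_Suc: "cnt X a b (Suc n) = cnt X a b n + (if X n = a \<and> X (Suc n) = b then 1 else 0)"
  by (simp add: cnt_def)

lemma cnt_0: "cnt X a b 0 = 0" by (simp add: cnt_def)

lemma card_Suc_pred: "card {t. t < Suc T \<and> P t} = card {t. t < T \<and> P t} + (if P T then 1 else 0)"
proof -
  have e: "{t. t < Suc T \<and> P t} = {t. t < T \<and> P t} \<union> (if P T then {T} else {})"
    by (auto simp: less_Suc_eq)
  have f: "finite {t. t < T \<and> P t}" by simp
  show ?thesis unfolding e using f by (auto simp: card_insert_if)
qed

lemma runs_Suc: "num_runs (Suc (Suc n)) X = num_runs (Suc n) X + (if X (Suc n) = 1 \<and> X n = 0 then 1 else 0)"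
  unfolding num_runs_def by (subst card_Suc_pred) auto

lemma runs_1: "num_runs (Suc 0) X = (if X 0 = 1 then 1 else 0)"
  unfolding num_runs_def by (subst card_Suc_pred) auto

lemma runs_le: "num_runs T X \<le> T"
proof -
  have "num_runs T X \<le> card {..<T}" unfolding num_runs_def
    by (rule card_mono) auto
  then show ?thesis by simp
qed

lemma counts:
  assumes "\<forall>t\<le>n. X t \<in> {0, 1}"
  shows "cnt X 0 1 n + (if X 0 = 1 then 1 else 0) = real (num_runs (Suc n) X) \<and>
    cnt X 1 0 n + (if X n = 1 then 1 else 0) = real (num_runs (Suc n) X) \<and>
    cnt X 1 1 n + cnt X 1 0 n + (if X n = 1 then 1 else 0) = (\<Sum>t<Suc n. real (X t)) \<and>
    cnt X 0 0 n + cnt X 0 1 n + cnt X 1 0 n + cnt X 1 1 n = real n"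
  using assms
proof (induction n)
  case 0
  then show ?case by (auto simp: cnt_0 runs_1)
next
  case (Suc n)
  then have IH: "cnt X 0 1 n + (if X 0 = 1 then 1 else 0) = real (num_runs (Suc n) X) \<and>
    cnt X 1 0 n + (if X n = 1 then 1 else 0) = real (num_runs (Suc n) X) \<and>
    cnt X 1 1 n + cnt X 1 0 n + (if X n = 1 then 1 else 0) = (\<Sum>t<Suc n. real (X t)) \<and>
    cnt X 0 0 n + cnt X 0 1 n + cnt X 1 0 n + cnt X 1 1 n = real n" by auto
  have a: "X n \<in> {0,1}" "X (Suc n) \<in> {0,1}" using Suc.prems by auto
  show ?case using IH a unfolding cnt_Suc runs_Suc
    by (auto simp: cnt_Suc runs_Suc)
qed

lemma arith_main:
  fixes n c00 c01 c10 c11 m S a b :: real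
  assumes n: "n \<ge> 1" and m: "0 \<le> m" "m \<le> n + 1" and S: "0 \<le> S" "S \<le> n + 1"
    and a: "a = 0 \<or> a = 1" and b: "b = 0 \<or> b = 1"
    and c01: "c01 = m - a" and c10: "c10 = m - b" and c11: "c11 = S - m"
    and c00: "c00 = n - m - S + a + b"
  shows "\<bar>c00 / n - (1 - S/(n+1) - m/(n+1))\<bar> \<le> 2 / n \<and>
         \<bar>c01 / n - m/(n+1)\<bar> \<le> 1 / n \<and>
         \<bar>c10 / n - m/(n+1)\<bar> \<le> 1 / n \<and>
         \<bar>c11 / n - (S/(n+1) - m/(n+1))\<bar> \<le> 1 / n"
proof -
  have np: "n > 0" "n + 1 > 0" using n by auto
  have e1: "c00 / n - (1 - S/(n+1) - m/(n+1)) = ((a+b)*(n+1) - (m+S)) / (n*(n+1))"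
    using np unfolding c00 by (simp add: divide_simps) (simp add: algebra_simps)
  have e2: "c01 / n - m/(n+1) = (m - a*(n+1)) / (n*(n+1))"
    using np unfolding c01 by (simp add: divide_simps) (simp add: algebra_simps)
  have e3: "c10 / n - m/(n+1) = (m - b*(n+1)) / (n*(n+1))"
    using np unfolding c10 by (simp add: divide_simps) (simp add: algebra_simps)
  have e4: "c11 / n - (S/(n+1) - m/(n+1)) = (S - m) / (n*(n+1))"
    using np unfolding c11 by (simp add: divide_simps) (simp add: algebra_simps)
  have g: "\<bar>x / (n*(n+1))\<bar> \<le> k / n" if "\<bar>x\<bar> \<le> k * (n+1)" for x k
  proof -
    have "\<bar>x / (n*(n+1))\<bar> = \<bar>x\<bar> / (n*(n+1))" using np by simp
    also have "\<dots> \<le> k*(n+1) / (n*(n+1))" using np that by (intro divide_right_mono) auto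
    also have "\<dots> = k / n" using np by simp
    finally show ?thesis .
  qed
  show ?thesis unfolding e1 e2 e3 e4
    using a b m S by (intro conjI g) (auto simp: abs_if)
qed

lemma abs_helper:
  fixes p u d k :: real
  assumes "\<bar>p - u\<bar> \<le> k"
  shows "\<bar>\<bar>p - (u + d)\<bar> - \<bar>d\<bar>\<bar> \<le> k" "\<bar>\<bar>p - (u - d)\<bar> - \<bar>d\<bar>\<bar> \<le> k"
  using assms by (smt (verit))+


lemma lin_helper:
  fixes a1 a2 a3 a4 D k :: real
  assumes "\<bar>a1 - D\<bar> \<le> 2*k" "\<bar>a2 - D\<bar> \<le> k" "\<bar>a3 - D\<bar> \<le> k" "\<bar>a4 - D\<bar> \<le> k"
  shows "\<bar>1/2 * (a1 + a2 + a3 + a4) - 2 * D\<bar> \<le> 1/2 * (2*k + k + k + k)"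
  using assms unfolding abs_le_iff by (auto simp: field_simps; linarith)

lemma eps_helper:
  fixes p00 p01 p10 p11 u0 u1 u3 d k :: real
  assumes "\<bar>p00 - u0\<bar> \<le> 2*k" "\<bar>p01 - u1\<bar> \<le> k" "\<bar>p10 - u1\<bar> \<le> k" "\<bar>p11 - u3\<bar> \<le> k"
  shows "\<bar>1/2 * (\<bar>p00 - (u0 + d)\<bar> + \<bar>p01 - (u1 - d)\<bar> + \<bar>p10 - (u1 - d)\<bar> + \<bar>p11 - (u3 + d)\<bar>) - 2 * \<bar>d\<bar>\<bar>
     \<le> 1/2 * (2*k + k + k + k)"
  by (rule lin_helper[OF abs_helper(1)[OF assms(1)] abs_helper(2)[OF assms(2)] abs_helper(2)[OF assms(3)] abs_helper(1)[OF assms(4)]])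

theorem proposition3p1:
  "\<forall>e>0. \<exists>T0::nat. \<forall>T\<ge>T0. \<forall>X::nat \<Rightarrow> nat. (\<forall>t<T. X t \<in> {0, 1}) \<longrightarrow>
     \<bar>pair_freq T X 0 0 - (1 - burst_density T X - alt_rate T X)\<bar> \<le> e \<and>
     \<bar>pair_freq T X 0 1 - alt_rate T X\<bar> \<le> e \<and>
     \<bar>pair_freq T X 1 0 - alt_rate T X\<bar> \<le> e \<and>
     \<bar>pair_freq T X 1 1 - (burst_density T X - alt_rate T X)\<bar> \<le> e \<and>
     \<bar>eps3 T X - 2 * \<bar>alt_rate T X - burst_density T X * (1 - burst_density T X)\<bar>\<bar> \<le> e"
proof (intro allI impI)
  fix e :: real assume e: "e > 0"
  obtain N :: nat where N: "N > 3 / e" using reals_Archimedean2 by blast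
  show "\<exists>T0::nat. \<forall>T\<ge>T0. \<forall>X::nat \<Rightarrow> nat. (\<forall>t<T. X t \<in> {0, 1}) \<longrightarrow>
     \<bar>pair_freq T X 0 0 - (1 - burst_density T X - alt_rate T X)\<bar> \<le> e \<and>
     \<bar>pair_freq T X 0 1 - alt_rate T X\<bar> \<le> e \<and>
     \<bar>pair_freq T X 1 0 - alt_rate T X\<bar> \<le> e \<and>
     \<bar>pair_freq T X 1 1 - (burst_density T X - alt_rate T X)\<bar> \<le> e \<and>
     \<bar>eps3 T X - 2 * \<bar>alt_rate T X - burst_density T X * (1 - burst_density T X)\<bar>\<bar> \<le> e"
  proof (intro exI[of _ "Suc N"] allI impI)
    fix T X assume T: "Suc N \<le> T" and X: "\<forall>t<T. X t \<in> {0, (1::nat)}"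
    define n where "n = T - 1"
    have Tn: "T = Suc n" and nN: "N \<le> n" using T unfolding n_def by auto
    have Npos: "real N > 0" using N e by (smt (verit) divide_pos_pos)
    have n1: "real n \<ge> 1" using Npos nN by simp
    have ne: "3 / real n \<le> e"
    proof -
      have "3 / e < real n" using N nN by linarith
      then show ?thesis using e n1 by (simp add: field_simps)
    qed
    have Xb: "\<forall>t\<le>n. X t \<in> {0,1}" using X Tn by auto
    note C = counts[OF Xb]
    define m where "m = real (num_runs (Suc n) X)"
    define S where "S = (\<Sum>t<Suc n. real (X t))"
    define a :: real where "a = (if X 0 = 1 then 1 else 0)"
    define b :: real where "b = (if X n = 1 then 1 else 0)"
    have m: "0 \<le> m" "m \<le> real n + 1" unfolding m_def using runs_le[of "Suc n" X] by auto
    have S: "0 \<le> S" "S \<le> real n + 1"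
    proof -
      show "0 \<le> S" unfolding S_def by (simp add: sum_nonneg)
      have "S \<le> (\<Sum>t<Suc n. 1)" unfolding S_def
      proof (rule sum_mono)
        fix t assume "t \<in> {..<Suc n}"
        then have "X t \<in> {0,1}" using Xb by auto
        then show "real (X t) \<le> 1" by auto
      qed
      then show "S \<le> real n + 1" by simp
    qed
    have pf: "pair_freq T X x y = cnt X x y n / real n" for x y
      unfolding pair_freq_def cnt_def Tn by simp
    have bd: "burst_density T X = S / (real n + 1)"
      unfolding burst_density_def S_def Tn by simp
    have ar: "alt_rate T X = m / (real n + 1)"
      unfolding alt_rate_def m_def Tn by simp
    have A: "\<bar>cnt X 0 0 n / real n - (1 - S/(real n+1) - m/(real n+1))\<bar> \<le> 2 / real n \<and>
         \<bar>cnt X 0 1 n / real n - m/(real n+1)\<bar> \<le> 1 / real n \<and>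
         \<bar>cnt X 1 0 n / real n - m/(real n+1)\<bar> \<le> 1 / real n \<and>
         \<bar>cnt X 1 1 n / real n - (S/(real n+1) - m/(real n+1))\<bar> \<le> 1 / real n"
      by (rule arith_main[OF n1 m S, where a=a and b=b]) (use C in \<open>auto simp: a_def b_def m_def S_def\<close>)
    define \<rho> where "\<rho> = S / (real n + 1)"
    define q where "q = m / (real n + 1)"
    define d where "d = q - \<rho> * (1 - \<rho>)"
    define p00 where "p00 = cnt X 0 0 n / n"
    define p01 where "p01 = cnt X 0 1 n / n"
    define p10 where "p10 = cnt X 1 0 n / n"
    define p11 where "p11 = cnt X 1 1 n / n"
    have A': "\<bar>p00 - (1 - \<rho> - q)\<bar> \<le> 2 / n" "\<bar>p01 - q\<bar> \<le> 1 / n" "\<bar>p10 - q\<bar> \<le> 1 / n"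
      "\<bar>p11 - (\<rho> - q)\<bar> \<le> 1 / n"
      using A unfolding p00_def p01_def p10_def p11_def \<rho>_def q_def by auto
    have E: "eps3 T X = 1/2 * (\<bar>p00 - (1-\<rho>)^2\<bar> + \<bar>p01 - \<rho>*(1-\<rho>)\<bar> + \<bar>p10 - \<rho>*(1-\<rho>)\<bar> + \<bar>p11 - \<rho>^2\<bar>)"
    proof -
      have bd': "burst_density T X = \<rho>" unfolding bd \<rho>_def ..
      show ?thesis unfolding eps3_def pf bd' p00_def p01_def p10_def p11_def
        by (simp add: power2_eq_square)
    qed
    have r1: "(1-\<rho>)^2 = (1 - \<rho> - q) + d" unfolding d_def by (simp add: power2_eq_square algebra_simps)
    have r2: "\<rho>*(1-\<rho>) = q - d" unfolding d_def by simp
    have r4: "\<rho>^2 = (\<rho> - q) + d" unfolding d_def by (simp add: power2_eq_square algebra_simps)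
    have "\<bar>eps3 T X - 2 * \<bar>d\<bar>\<bar> \<le> 1/2 * (2*(1/n) + 1/n + 1/n + 1/n)"
      unfolding E r1 r2 r4 by (rule eps_helper) (use A' in auto)
    also have "\<dots> \<le> 3 / n" using n1 by (simp add: field_simps)
    finally have F: "\<bar>eps3 T X - 2 * \<bar>d\<bar>\<bar> \<le> e" using ne by linarith
    have le: "2 / real n \<le> e" "1 / real n \<le> e" using ne n1 by (simp_all add: field_simps)
    show "\<bar>pair_freq T X 0 0 - (1 - burst_density T X - alt_rate T X)\<bar> \<le> e \<and>
     \<bar>pair_freq T X 0 1 - alt_rate T X\<bar> \<le> e \<and>
     \<bar>pair_freq T X 1 0 - alt_rate T X\<bar> \<le> e \<and>
     \<bar>pair_freq T X 1 1 - (burst_density T X - alt_rate T X)\<bar> \<le> e \<and>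
     \<bar>eps3 T X - 2 * \<bar>alt_rate T X - burst_density T X * (1 - burst_density T X)\<bar>\<bar> \<le> e"
      unfolding pf bd ar using A' F le
      unfolding p00_def p01_def p10_def p11_def \<rho>_def q_def d_def by linarith
  qed
qed

end
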